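(* Let $n\ge 3$. For every $A\subseteq[n]$, the operator $\Gamma_A$ belongs to the unital associative algebra (over $\mathbb{R}$) generated by the operators $\Gamma_B$ with $B\subseteq[n]$, $|B|=2$; i.e. each $\Gamma_A$ is a polynomial (with real coefficients depending on $\mu_1,\dots,\mu_n$) in the $\Gamma_{\{i,j\}}$, $1\le i<j\le n$.
   Context: Fix $n\ge1$ and real parameters $\mu_1,\dots,\mu_n>0$; write $[n]=\{1,\dots,n\}$. For $i\in[n]$, $r_i$ is the reflection $(r_if)(x)=f(x_1,\dots,-x_i,\dots,x_n)$ and $T_i=\partial_{x_i}+\frac{\mu_i}{x_i}(1-r_i)$. $\mathcal{C}\ell_n$ is generated by $e_1,\dots,e_n$ with $e_ie_j+e_je_i=-2\delta_{ij}$, $V$ is a fixed left $\mathcal{C}\ell_n$-module, and operators act on $\mathcal{P}(\mathbb{R}^n)\otimes V$ with $x_i,T_i,r_i$ acting on the polynomial factor and $e_i$ on $V$. For $A\subseteq[n]$: $\underline{D}_A=\sum_{i\in A}e_iT_i$, $\underline{x}_A=\sum_{i\in A}e_ix_i$, $\underline{S}_A=\frac12([\underline{x}_A,\underline{D}_A]-1)$, $\Gamma_A=\underline{S}_A\prod_{i\in A}r_i$ (empty sums $0$, empty products $1$). *)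

theory Defs
  imports Complex_Main
begin

text \<open>
Model of P(R^n) (x) V.  The coordinate index set [n] is the finite type 'n (so n = CARD('n)).
A multi-index alpha :: 'n => nat stands for the monomial x^alpha.  An element of P(R^n) (x) V is
represented by its coefficient function f :: ('n => nat) => 'v (coefficient of x^alpha in V),
and the genuine elements are those with finite support (set Pspace).  V is a real vector space
'v with a left Cl_n action given by linear maps e i satisfying e_i e_j + e_j e_i = -2 delta_ij.
\<close>

type_synonym ('n, 'v) elt = "('n \<Rightarrow> nat) \<Rightarrow> 'v"
type_synonym ('n, 'v) oper = "('n, 'v) elt \<Rightarrow> ('n, 'v) elt"

definition Pspace :: "('n, 'v::zero) elt set" where
  "Pspace = {f. finite {\<alpha>. f \<alpha> \<noteq> 0}}"

definition xop :: "'n \<Rightarrow> ('n, 'v::real_vector) oper" where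
  "xop i f = (\<lambda>\<alpha>. if \<alpha> i = 0 then 0 else f (\<alpha>(i := \<alpha> i - 1)))"

definition dop :: "'n \<Rightarrow> ('n, 'v::real_vector) oper" where
  "dop i f = (\<lambda>\<alpha>. real (\<alpha> i + 1) *\<^sub>R f (\<alpha>(i := \<alpha> i + 1)))"

text \<open>reflection r_i: (r_i f)(x) = f(.., -x_i, ..)\<close>
definition rop :: "'n \<Rightarrow> ('n, 'v::real_vector) oper" where
  "rop i f = (\<lambda>\<alpha>. ((-1::real) ^ \<alpha> i) *\<^sub>R f \<alpha>)"

text \<open>division by x_i (exact on polynomials divisible by x_i, such as (1 - r_i) f)\<close>
definition divx :: "'n \<Rightarrow> ('n, 'v::real_vector) oper" where
  "divx i f = (\<lambda>\<alpha>. f (\<alpha>(i := \<alpha> i + 1)))"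

definition Top :: "('n \<Rightarrow> real) \<Rightarrow> 'n \<Rightarrow> ('n, 'v::real_vector) oper" where
  "Top \<mu> i f = (\<lambda>\<alpha>. dop i f \<alpha> + \<mu> i *\<^sub>R divx i (\<lambda>\<beta>. f \<beta> - rop i f \<beta>) \<alpha>)"

definition eop :: "('n \<Rightarrow> 'v \<Rightarrow> 'v) \<Rightarrow> 'n \<Rightarrow> ('n, 'v::real_vector) oper" where
  "eop e i f = (\<lambda>\<alpha>. e i (f \<alpha>))"

definition DA :: "('n \<Rightarrow> real) \<Rightarrow> ('n \<Rightarrow> 'v \<Rightarrow> 'v) \<Rightarrow> 'n set \<Rightarrow> ('n, 'v::real_vector) oper" where
  "DA \<mu> e A f = (\<lambda>\<alpha>. \<Sum>i\<in>A. eop e i (Top \<mu> i f) \<alpha>)"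

definition XA :: "('n \<Rightarrow> 'v \<Rightarrow> 'v) \<Rightarrow> 'n set \<Rightarrow> ('n, 'v::real_vector) oper" where
  "XA e A f = (\<lambda>\<alpha>. \<Sum>i\<in>A. eop e i (xop i f) \<alpha>)"

definition SA :: "('n \<Rightarrow> real) \<Rightarrow> ('n \<Rightarrow> 'v \<Rightarrow> 'v) \<Rightarrow> 'n set \<Rightarrow> ('n, 'v::real_vector) oper" where
  "SA \<mu> e A f = (\<lambda>\<alpha>. (1/2::real) *\<^sub>R
      (XA e A (DA \<mu> e A f) \<alpha> - DA \<mu> e A (XA e A f) \<alpha> - f \<alpha>))"

definition rA :: "'n set \<Rightarrow> ('n, 'v::real_vector) oper" where
  "rA A f = (\<lambda>\<alpha>. (\<Prod>i\<in>A. (-1::real) ^ \<alpha> i) *\<^sub>R f \<alpha>)"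

definition Gamma :: "('n \<Rightarrow> real) \<Rightarrow> ('n \<Rightarrow> 'v \<Rightarrow> 'v) \<Rightarrow> 'n set \<Rightarrow> ('n, 'v::real_vector) oper" where
  "Gamma \<mu> e A f = SA \<mu> e A (rA A f)"

inductive_set gen_alg :: "('n set \<Rightarrow> ('n, 'v::real_vector) oper) \<Rightarrow> ('n, 'v) oper set"
  for G :: "'n set \<Rightarrow> ('n, 'v) oper" where
  one: "(\<lambda>f. f) \<in> gen_alg G"
| gen: "card B = 2 \<Longrightarrow> G B \<in> gen_alg G"
| smult: "F \<in> gen_alg G \<Longrightarrow> (\<lambda>f \<alpha>. c *\<^sub>R F f \<alpha>) \<in> gen_alg G"
| add: "F \<in> gen_alg G \<Longrightarrow> H \<in> gen_alg G \<Longrightarrow> (\<lambda>f \<alpha>. F f \<alpha> + H f \<alpha>) \<in> gen_alg G"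
| mult: "F \<in> gen_alg G \<Longrightarrow> H \<in> gen_alg G \<Longrightarrow> (\<lambda>f. F (H f)) \<in> gen_alg G"

end

theory Submission
  imports Defs
begin


definition linop :: "('n, 'v::real_vector) oper \<Rightarrow> bool" where
  "linop F \<longleftrightarrow> (\<forall>f g. F (\<lambda>a. f a + g a) = (\<lambda>a. F f a + F g a)) \<and>
                (\<forall>c f. F (\<lambda>a. c *\<^sub>R f a) = (\<lambda>a. c *\<^sub>R F f a))"

lemma linopD: "linop F \<Longrightarrow> F (\<lambda>a. f a + g a) = (\<lambda>a. F f a + F g a)"
  "linop F \<Longrightarrow> F (\<lambda>a. c *\<^sub>R f a) = (\<lambda>a. c *\<^sub>R F f a)"
  by (auto simp: linop_def)

lemma linop_zero: "linop F \<Longrightarrow> F (\<lambda>a. 0) = (\<lambda>a. 0)"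
  using linopD(2)[of F 0 "\<lambda>a. 0"] by simp

lemma linop_neg: "linop F \<Longrightarrow> F (\<lambda>a. - f a) = (\<lambda>a. - F f a)"
  using linopD(2)[of F "-1" f] by simp

lemma linop_diff: "linop F \<Longrightarrow> F (\<lambda>a. f a - g a) = (\<lambda>a. F f a - F g a)"
  using linopD(1)[of F f "\<lambda>a. - g a"] linop_neg[of F g] by (simp add: fun_eq_iff)

typedef (overloaded) ('n, 'v) lop = "{F :: ('n, 'v::real_vector) oper. linop F}"
  by (rule exI[of _ "\<lambda>f. f"]) (simp add: linop_def)

setup_lifting type_definition_lop

instantiation lop :: (type, real_vector) "{real_algebra, monoid_mult}"
begin
lift_definition zero_lop :: "('a,'b) lop" is "\<lambda>f a. 0" by (simp add: linop_def)
lift_definition one_lop :: "('a,'b) lop" is "\<lambda>f. f" by (simp add: linop_def)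
lift_definition plus_lop :: "('a,'b) lop \<Rightarrow> ('a,'b) lop \<Rightarrow> ('a,'b) lop" is
  "\<lambda>F G f a. F f a + G f a" by (simp add: linop_def fun_eq_iff algebra_simps)
lift_definition minus_lop :: "('a,'b) lop \<Rightarrow> ('a,'b) lop \<Rightarrow> ('a,'b) lop" is
  "\<lambda>F G f a. F f a - G f a" by (simp add: linop_def fun_eq_iff algebra_simps)
lift_definition uminus_lop :: "('a,'b) lop \<Rightarrow> ('a,'b) lop" is
  "\<lambda>F f a. - F f a" by (simp add: linop_def fun_eq_iff algebra_simps)
lift_definition times_lop :: "('a,'b) lop \<Rightarrow> ('a,'b) lop \<Rightarrow> ('a,'b) lop" is
  "\<lambda>F G f. F (G f)" by (simp add: linop_def)
lift_definition scaleR_lop :: "real \<Rightarrow> ('a,'b) lop \<Rightarrow> ('a,'b) lop" is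
  "\<lambda>c F f a. c *\<^sub>R F f a" by (simp add: linop_def fun_eq_iff algebra_simps)
instance
proof
  fix x y z :: "('a,'b) lop" and a b :: real
  show "x + y + z = x + (y + z)" by transfer (simp add: algebra_simps)
  show "x + y = y + x" by transfer (simp add: algebra_simps)
  show "0 + x = x" by transfer simp
  show "- x + x = 0" by transfer simp
  show "x - y = x + - y" by transfer simp
  show "a *\<^sub>R (x + y) = a *\<^sub>R x + a *\<^sub>R y" by transfer (simp add: algebra_simps)
  show "(a + b) *\<^sub>R x = a *\<^sub>R x + b *\<^sub>R x" by transfer (simp add: algebra_simps)
  show "a *\<^sub>R b *\<^sub>R x = (a * b) *\<^sub>R x" by transfer simp
  show "1 *\<^sub>R x = x" by transfer simp
  show "x * y * z = x * (y * z)" by transfer simp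
  show "(x + y) * z = x * z + y * z" by transfer simp
  show "x * (y + z) = x * y + x * z" by transfer (simp add: linopD)
  show "a *\<^sub>R x * y = a *\<^sub>R (x * y)" by transfer simp
  show "x * a *\<^sub>R y = a *\<^sub>R (x * y)" by transfer (simp add: linopD)
  show "1 * x = x" by transfer simp
  show "x * 1 = x" by transfer simp
qed
end



lemma Top_eq: "Top \<mu> i f \<alpha> = (real (\<alpha> i + 1) + \<mu> i * (1 - (-1)^(\<alpha> i + 1))) *\<^sub>R f (\<alpha>(i := \<alpha> i + 1))"
  by (simp add: Top_def dop_def divx_def rop_def algebra_simps)

lemma linop_xop: "linop (xop i)" by (simp add: linop_def xop_def fun_eq_iff)
lemma linop_Top: "linop (Top \<mu> i)" by (simp add: linop_def Top_eq fun_eq_iff algebra_simps)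
lemma linop_rop: "linop (rop i)" by (simp add: linop_def rop_def fun_eq_iff algebra_simps)
lemma linop_rA: "linop (rA A)" by (simp add: linop_def rA_def fun_eq_iff algebra_simps)
lemma linop_eop: "linear (e i) \<Longrightarrow> linop (eop e i)"
  by (simp add: linop_def eop_def fun_eq_iff linear_add linear_scale)

lemma rr: "rop i (rop i f) = f" by (simp add: rop_def fun_eq_iff)
lemma rr2: "rop i (rop j f) = rop j (rop i f)" by (simp add: rop_def fun_eq_iff)
lemma rx: "i \<noteq> j \<Longrightarrow> rop i (xop j f) = xop j (rop i f)" by (simp add: rop_def xop_def fun_eq_iff)
lemma rt: "i \<noteq> j \<Longrightarrow> rop i (Top \<mu> j f) = Top \<mu> j (rop i f)" by (simp add: rop_def Top_eq fun_eq_iff)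
lemma rxi: "rop i (xop i f) = (\<lambda>a. - xop i (rop i f) a)"
proof (rule ext)
  fix a show "rop i (xop i f) a = - xop i (rop i f) a"
    by (cases "a i") (auto simp: rop_def xop_def)
qed
lemma rti: "rop i (Top \<mu> i f) = (\<lambda>a. - Top \<mu> i (rop i f) a)"
  by (auto simp: rop_def Top_eq fun_eq_iff)
lemma xx: "xop i (xop j f) = xop j (xop i f)"
  by (cases "i = j") (auto simp: xop_def fun_eq_iff fun_upd_twist)
lemma xt: "i \<noteq> j \<Longrightarrow> xop i (Top \<mu> j f) = Top \<mu> j (xop i f)"
  by (auto simp: xop_def Top_eq fun_eq_iff fun_upd_twist)
lemma tt: "Top \<mu> i (Top \<mu> j f) = Top \<mu> j (Top \<mu> i f)"
  by (cases "i = j") (auto simp: Top_eq fun_eq_iff fun_upd_twist)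
lemma txi: "Top \<mu> i (xop i f) = (\<lambda>a. xop i (Top \<mu> i f) a + f a + (2 * \<mu> i) *\<^sub>R rop i f a)"
proof (rule ext)
  fix a
  show "Top \<mu> i (xop i f) a = xop i (Top \<mu> i f) a + f a + (2 * \<mu> i) *\<^sub>R rop i f a"
  proof (cases "a i")
    case 0 then show ?thesis by (simp add: Top_eq xop_def rop_def algebra_simps fun_upd_idem)
  next
    case (Suc m)
    have 1: "Top \<mu> i (xop i f) a = (real (m + 2) + \<mu> i * (1 - (-1)^(m+2))) *\<^sub>R f a"
      using Suc by (simp add: Top_eq xop_def fun_upd_idem)
    have 2: "xop i (Top \<mu> i f) a = (real (m + 1) + \<mu> i * (1 - (-1)^(m+1))) *\<^sub>R f a"
      using Suc by (simp add: Top_eq xop_def fun_upd_idem)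
    have 3: "rop i f a = (-1)^(m+1) *\<^sub>R f a" using Suc by (simp add: rop_def)
    have "xop i (Top \<mu> i f) a + f a + (2 * \<mu> i) *\<^sub>R rop i f a =
       ((real (m + 1) + \<mu> i * (1 - (-1)^(m+1))) + 1 + (2 * \<mu> i) * (-1)^(m+1)) *\<^sub>R f a"
      unfolding 2 3 by (simp only: scaleR_add_left scaleR_one scaleR_scaleR)
    also have "\<dots> = Top \<mu> i (xop i f) a" unfolding 1
      by (rule arg_cong[where f="\<lambda>c. c *\<^sub>R f a"]) (simp add: algebra_simps)
    finally show ?thesis by simp
  qed
qed

lemma ex: "linear (e i) \<Longrightarrow> eop e i (xop j f) = xop j (eop e i f)"
  by (simp add: eop_def xop_def fun_eq_iff linear_0)
lemma et: "linear (e i) \<Longrightarrow> eop e i (Top \<mu> j f) = Top \<mu> j (eop e i f)"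
  by (simp add: eop_def Top_eq fun_eq_iff linear_scale)
lemma er: "linear (e i) \<Longrightarrow> eop e i (rop j f) = rop j (eop e i f)"
  by (simp add: eop_def rop_def fun_eq_iff linear_scale)
lemma erA: "linear (e i) \<Longrightarrow> eop e i (rA C f) = rA C (eop e i f)"
  by (simp add: eop_def rA_def fun_eq_iff linear_scale)

lemma prod_upd: "j \<notin> C \<Longrightarrow> (\<Prod>i\<in>C. g ((\<alpha>(j:=v)) i)) = (\<Prod>i\<in>C. g (\<alpha> i))"
  by (rule prod.cong) auto
lemma prod_upd': "j \<notin> C \<Longrightarrow> (\<Prod>i\<in>C. g (if i = j then v else \<alpha> i)) = (\<Prod>i\<in>C. g (\<alpha> i))"
  by (rule prod.cong) auto

lemma rAx: "j \<notin> C \<Longrightarrow> rA C (xop j f) = xop j (rA C f)"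
  by (simp add: rA_def xop_def fun_eq_iff prod_upd prod_upd')
lemma rAt: "j \<notin> C \<Longrightarrow> rA C (Top \<mu> j f) = Top \<mu> j (rA C f)"
  by (simp add: rA_def Top_eq fun_eq_iff prod_upd prod_upd')
lemma rAr: "rA C (rop j f) = rop j (rA C f)"
  by (simp add: rA_def rop_def fun_eq_iff)
lemma rA_insert: "finite C \<Longrightarrow> j \<notin> C \<Longrightarrow> rA (insert j C) f = rop j (rA C f)"
  by (simp add: rA_def rop_def fun_eq_iff mult.commute)
lemma rA_empty: "rA {} f = f"
  by (simp add: rA_def fun_eq_iff)

lemma lop_eqI: "(\<And>f. Rep_lop u f = Rep_lop v f) \<Longrightarrow> u = v"
  using Rep_lop_inject by fastforce

lemmas rep_simps = times_lop.rep_eq plus_lop.rep_eq minus_lop.rep_eq uminus_lop.rep_eq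
  scaleR_lop.rep_eq one_lop.rep_eq zero_lop.rep_eq

lemma Rep_sum: "Rep_lop (sum u C) f = (\<lambda>a. \<Sum>i\<in>C. Rep_lop (u i) f a)"
  by (induction C rule: infinite_finite_induct) (auto simp: rep_simps)

locale dd =
  fixes \<mu> :: "'n \<Rightarrow> real" and e :: "'n \<Rightarrow> 'v::real_vector \<Rightarrow> 'v"
  assumes lin: "\<And>i. linear (e i)"
    and cl: "\<And>i j v. e i (e j v) + e j (e i v) = (if i = j then (-2) *\<^sub>R v else 0)"
begin

definition X :: "'n \<Rightarrow> ('n,'v) lop" where "X i = Abs_lop (xop i)"
definition T :: "'n \<Rightarrow> ('n,'v) lop" where "T i = Abs_lop (Top \<mu> i)"
definition R :: "'n \<Rightarrow> ('n,'v) lop" where "R i = Abs_lop (rop i)"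
definition E :: "'n \<Rightarrow> ('n,'v) lop" where "E i = Abs_lop (eop e i)"
definition RA :: "'n set \<Rightarrow> ('n,'v) lop" where "RA C = Abs_lop (rA C)"

lemma Rep_X: "Rep_lop (X i) = xop i" by (simp add: X_def Abs_lop_inverse linop_xop)
lemma Rep_T: "Rep_lop (T i) = Top \<mu> i" by (simp add: T_def Abs_lop_inverse linop_Top)
lemma Rep_R: "Rep_lop (R i) = rop i" by (simp add: R_def Abs_lop_inverse linop_rop)
lemma Rep_E: "Rep_lop (E i) = eop e i" by (simp add: E_def Abs_lop_inverse linop_eop lin)
lemma Rep_RA: "Rep_lop (RA C) = rA C" by (simp add: RA_def Abs_lop_inverse linop_rA)

lemmas rs = rep_simps Rep_X Rep_T Rep_R Rep_E Rep_RA

lemma RR: "R i * R i = 1" by (rule lop_eqI) (simp add: rs rr)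
lemma Rc: "R i * R j = R j * R i" by (rule lop_eqI) (simp add: rs rr2)
lemma RX: "i \<noteq> j \<Longrightarrow> R i * X j = X j * R i" by (rule lop_eqI) (simp add: rs rx)
lemma RT: "i \<noteq> j \<Longrightarrow> R i * T j = T j * R i" by (rule lop_eqI) (simp add: rs rt)
lemma RXi: "R i * X i = - (X i * R i)" by (rule lop_eqI) (simp add: rs rxi)
lemma RTi: "R i * T i = - (T i * R i)" by (rule lop_eqI) (simp add: rs rti)
lemma XX: "X i * X j = X j * X i" by (rule lop_eqI) (simp add: rs xx)
lemma XT: "i \<noteq> j \<Longrightarrow> X i * T j = T j * X i" by (rule lop_eqI) (simp add: rs xt)
lemma TT: "T i * T j = T j * T i" by (rule lop_eqI) (simp add: rs tt)
lemma TX: "T i * X i = X i * T i + 1 + (2 * \<mu> i) *\<^sub>R R i" by (rule lop_eqI) (simp add: rs txi)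
lemma EX: "E i * X j = X j * E i" by (rule lop_eqI) (simp add: rs ex lin)
lemma ET: "E i * T j = T j * E i" by (rule lop_eqI) (simp add: rs et lin)
lemma ER: "E i * R j = R j * E i" by (rule lop_eqI) (simp add: rs er lin)
lemma ERA: "E i * RA C = RA C * E i" by (rule lop_eqI) (simp add: rs erA lin)
lemma EE: "E i * E j + E j * E i = (if i = j then (-2) *\<^sub>R 1 else 0)"
  by (rule lop_eqI) (auto simp: rs eop_def cl fun_eq_iff)
lemma RAX: "j \<notin> C \<Longrightarrow> RA C * X j = X j * RA C" by (rule lop_eqI) (simp add: rs rAx)
lemma RAT: "j \<notin> C \<Longrightarrow> RA C * T j = T j * RA C" by (rule lop_eqI) (simp add: rs rAt)
lemma RAR: "RA C * R j = R j * RA C" by (rule lop_eqI) (simp add: rs rAr)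
lemma RA_insert: "finite C \<Longrightarrow> j \<notin> C \<Longrightarrow> RA (insert j C) = RA C * R j"
  by (rule lop_eqI) (simp add: rs rA_insert rAr)
lemma RA_empty: "RA {} = 1" by (rule lop_eqI) (simp add: rs rA_empty)

end



context dd begin

definition Y :: "'n \<Rightarrow> ('n,'v) lop" where "Y i = E i * X i"
definition Z :: "'n \<Rightarrow> ('n,'v) lop" where "Z i = E i * T i"

lemma EEa: "i \<noteq> j \<Longrightarrow> E j * E i = - (E i * E j)"
  using EE[of i j] by (simp add: eq_neg_iff_add_eq_0 add.commute)

lemma EEi: "E i * E i = - 1"
proof -
  have "E i * E i + E i * E i = (-2) *\<^sub>R 1" using EE[of i i] by simp
  hence "2 *\<^sub>R (E i * E i) = (-2) *\<^sub>R 1" by (simp add: scaleR_2)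
  hence "(1/2) *\<^sub>R (2 *\<^sub>R (E i * E i)) = (1/2) *\<^sub>R ((-2) *\<^sub>R (1::('n,'v) lop))" by simp
  thus ?thesis by simp
qed

lemma cc: "(a::'a::ring) * b = b * a \<Longrightarrow> a * c = c * a \<Longrightarrow> a * (b * c) = (b * c) * a"
  by (metis mult.assoc)
lemma ca: "(a::'a::ring) * b = b * a \<Longrightarrow> a * c = - (c * a) \<Longrightarrow> a * (b * c) = - ((b * c) * a)"
proof -
  assume h: "a * b = b * a" "a * c = - (c * a)"
  have "a * (b * c) = (a * b) * c" by (simp only: mult.assoc)
  also have "\<dots> = b * (a * c)" by (simp only: h(1) mult.assoc)
  also have "\<dots> = - ((b * c) * a)" by (simp only: h(2) mult_minus_right mult.assoc)
  finally show ?thesis .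
qed
lemma ac: "(a::'a::ring) * b = - (b * a) \<Longrightarrow> a * c = c * a \<Longrightarrow> a * (b * c) = - ((b * c) * a)"
proof -
  assume h: "a * b = - (b * a)" "a * c = c * a"
  have "a * (b * c) = (a * b) * c" by (simp only: mult.assoc)
  also have "\<dots> = - (b * (a * c))" by (simp only: h(1) mult.assoc mult_minus_left)
  also have "\<dots> = - ((b * c) * a)" by (simp only: h(2) mult.assoc)
  finally show ?thesis .
qed
lemma aa: "(a::'a::ring) * b = - (b * a) \<Longrightarrow> a * c = - (c * a) \<Longrightarrow> a * (b * c) = (b * c) * a"
proof -
  assume h: "a * b = - (b * a)" "a * c = - (c * a)"
  have "a * (b * c) = (a * b) * c" by (simp only: mult.assoc)
  also have "\<dots> = - (b * (a * c))" by (simp only: h(1) mult.assoc mult_minus_left)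
  also have "\<dots> = (b * c) * a" by (simp only: h(2) mult.assoc mult_minus_right minus_minus)
  finally show ?thesis .
qed
lemma mid: "(b::'a::ring) * c = c * b \<Longrightarrow> (a * b) * (c * d) = (a * c) * (b * d)"
proof -
  assume h: "b * c = c * b"
  have "(a * b) * (c * d) = a * ((b * c) * d)" by (simp only: mult.assoc)
  also have "\<dots> = (a * c) * (b * d)" by (simp only: h mult.assoc)
  finally show ?thesis .
qed

lemma anti:
  assumes "i \<noteq> j" "U * E j = E j * U" "W * E i = E i * W" "U * W = W * U"
  shows "(E i * U) * (E j * W) = - ((E j * W) * (E i * U))"
proof -
  have "(E i * U) * (E j * W) = (E i * E j) * (U * W)" by (rule mid) (rule assms(2))
  moreover have "(E j * W) * (E i * U) = (E j * E i) * (W * U)" by (rule mid) (rule assms(3))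
  ultimately show ?thesis using EEa[OF assms(1)] assms(4) by simp
qed

lemma YY: "i \<noteq> j \<Longrightarrow> Y i * Y j = - (Y j * Y i)"
  unfolding Y_def by (rule anti) (auto simp: EX XX)
lemma YZ: "i \<noteq> j \<Longrightarrow> Y i * Z j = - (Z j * Y i)"
  unfolding Y_def Z_def by (rule anti) (auto simp: EX ET XT)
lemma ZY: "i \<noteq> j \<Longrightarrow> Z i * Y j = - (Y j * Z i)"
  unfolding Y_def Z_def by (rule anti) (auto simp: EX ET XT)
lemma ZZ: "i \<noteq> j \<Longrightarrow> Z i * Z j = - (Z j * Z i)"
  unfolding Z_def by (rule anti) (auto simp: ET TT)

lemma RY: "i \<noteq> j \<Longrightarrow> R i * Y j = Y j * R i"
  unfolding Y_def by (rule cc) (simp_all add: RX ER)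
lemma RZ: "i \<noteq> j \<Longrightarrow> R i * Z j = Z j * R i"
  unfolding Z_def by (rule cc) (simp_all add: RT ER)
lemma RYi: "R i * Y i = - (Y i * R i)"
  unfolding Y_def by (rule ca) (simp_all add: RXi ER)
lemma RZi: "R i * Z i = - (Z i * R i)"
  unfolding Z_def by (rule ca) (simp_all add: RTi ER)

lemma YZi: "Y i * Z i - Z i * Y i = 1 + (2 * \<mu> i) *\<^sub>R R i"
proof -
  have "Y i * Z i = (E i * E i) * (X i * T i)"
    unfolding Y_def Z_def by (rule mid) (simp add: EX)
  moreover have "Z i * Y i = (E i * E i) * (T i * X i)"
    unfolding Y_def Z_def by (rule mid) (simp add: ET)
  ultimately show ?thesis by (simp add: EEi TX)
qed

lemma RAY: "j \<notin> C \<Longrightarrow> RA C * Y j = Y j * RA C"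
  unfolding Y_def by (rule cc) (simp_all add: RAX ERA)
lemma RAZ: "j \<notin> C \<Longrightarrow> RA C * Z j = Z j * RA C"
  unfolding Z_def by (rule cc) (simp_all add: RAT ERA)


definition xC :: "'n set \<Rightarrow> ('n,'v) lop" where "xC C = (\<Sum>i\<in>C. Y i)"
definition DC :: "'n set \<Rightarrow> ('n,'v) lop" where "DC C = (\<Sum>i\<in>C. Z i)"
definition SS :: "'n set \<Rightarrow> ('n,'v) lop" where
  "SS C = (1/2) *\<^sub>R (xC C * DC C - DC C * xC C - 1)"
definition Gm :: "'n set \<Rightarrow> ('n,'v) lop" where "Gm C = SS C * RA C"

lemma Rep_xC: "Rep_lop (xC C) = XA e C"
  by (simp add: fun_eq_iff xC_def Rep_sum Y_def rs XA_def)
lemma Rep_DC: "Rep_lop (DC C) = DA \<mu> e C"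
  by (simp add: fun_eq_iff DC_def Rep_sum Z_def rs DA_def)
lemma Rep_SS: "Rep_lop (SS C) = SA \<mu> e C"
  by (simp add: fun_eq_iff SS_def rs Rep_xC Rep_DC SA_def)
lemma Rep_Gm: "Rep_lop (Gm C) = Gamma \<mu> e C"
  by (simp add: fun_eq_iff Gm_def rs Rep_SS Gamma_def)

lemma sum_anti: "(\<And>i. i \<in> C \<Longrightarrow> a * u i = - (u i * a)) \<Longrightarrow> a * sum u C = - (sum u C * a)"
  for a :: "'a::ring"
  by (simp add: sum_distrib_left sum_distrib_right sum_negf[symmetric])
lemma sum_comm: "(\<And>i. i \<in> C \<Longrightarrow> a * u i = u i * a) \<Longrightarrow> a * sum u C = sum u C * a"
  for a :: "'a::ring"
  by (simp add: sum_distrib_left sum_distrib_right)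

lemma Y_xC: "j \<notin> C \<Longrightarrow> Y j * xC C = - (xC C * Y j)"
  unfolding xC_def by (rule sum_anti) (metis YY)
lemma Y_DC: "j \<notin> C \<Longrightarrow> Y j * DC C = - (DC C * Y j)"
  unfolding DC_def by (rule sum_anti) (metis YZ)
lemma Z_xC: "j \<notin> C \<Longrightarrow> Z j * xC C = - (xC C * Z j)"
  unfolding xC_def by (rule sum_anti) (metis ZY)
lemma Z_DC: "j \<notin> C \<Longrightarrow> Z j * DC C = - (DC C * Z j)"
  unfolding DC_def by (rule sum_anti) (metis ZZ)
lemma R_xC: "j \<notin> C \<Longrightarrow> R j * xC C = xC C * R j"
  unfolding xC_def by (rule sum_comm) (metis RY)
lemma R_DC: "j \<notin> C \<Longrightarrow> R j * DC C = DC C * R j"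
  unfolding DC_def by (rule sum_comm) (metis RZ)

lemma SS_comm:
  assumes "a * xC C = xC C * a" "a * DC C = DC C * a"
  shows "a * SS C = SS C * a"
proof -
  have "a * (xC C * DC C) = (xC C * DC C) * a" by (rule cc) (fact assms)+
  moreover have "a * (DC C * xC C) = (DC C * xC C) * a" by (rule cc) (fact assms(2), fact assms(1))
  ultimately show ?thesis unfolding SS_def by (simp add: algebra_simps)
qed
lemma SS_comm':
  assumes "a * xC C = - (xC C * a)" "a * DC C = - (DC C * a)"
  shows "a * SS C = SS C * a"
proof -
  have "a * (xC C * DC C) = (xC C * DC C) * a" by (rule aa) (fact assms)+
  moreover have "a * (DC C * xC C) = (DC C * xC C) * a" by (rule aa) (fact assms(2), fact assms(1))
  ultimately show ?thesis unfolding SS_def by (simp add: algebra_simps)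
qed

lemma Y_SS: "j \<notin> C \<Longrightarrow> Y j * SS C = SS C * Y j"
  by (rule SS_comm') (simp_all add: Y_xC Y_DC)
lemma Z_SS: "j \<notin> C \<Longrightarrow> Z j * SS C = SS C * Z j"
  by (rule SS_comm') (simp_all add: Z_xC Z_DC)
lemma R_SS: "j \<notin> C \<Longrightarrow> R j * SS C = SS C * R j"
  by (rule SS_comm) (simp_all add: R_xC R_DC)

lemma SS_empty: "SS {} = - ((1/2) *\<^sub>R 1)"
  by (simp add: SS_def xC_def DC_def)

lemma SS_insert:
  assumes "finite C" "j \<notin> C"
  shows "SS (insert j C) = SS C + (1/2) *\<^sub>R 1 + \<mu> j *\<^sub>R R j + xC C * Z j + Y j * DC C"
proof -
  have x: "xC (insert j C) = Y j + xC C" and d: "DC (insert j C) = Z j + DC C"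
    using assms by (simp_all add: xC_def DC_def)
  have "xC (insert j C) * DC (insert j C) - DC (insert j C) * xC (insert j C) =
     (Y j * Z j - Z j * Y j) + (xC C * DC C - DC C * xC C) + (Y j * DC C - DC C * Y j)
      + (xC C * Z j - Z j * xC C)"
    unfolding x d by (simp add: algebra_simps)
  also have "\<dots> = 1 + (2 * \<mu> j) *\<^sub>R R j + (xC C * DC C - DC C * xC C) + 2 *\<^sub>R (Y j * DC C)
      + 2 *\<^sub>R (xC C * Z j)"
    using assms by (simp add: YZi Y_DC Z_xC scaleR_2)
  finally have h: "xC (insert j C) * DC (insert j C) - DC (insert j C) * xC (insert j C) = \<dots>" .
  show ?thesis unfolding SS_def h by (simp add: algebra_simps)
qed

end


lemma nest: "(a::'a::ring) * b = c \<Longrightarrow> a * (b * z) = c * z"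
  by (simp add: mult.assoc[symmetric])

lemma two_sc: "(c * 2) *\<^sub>R m = c *\<^sub>R m + c *\<^sub>R m" "(2 * c) *\<^sub>R m = c *\<^sub>R m + c *\<^sub>R m"
  for m :: "'a::real_vector"
  by (simp_all add: scaleR_add_left[symmetric])

context dd begin

lemma I3test:
  assumes jk: "j \<noteq> k"
  shows "Z j * R j * ((1/2) *\<^sub>R 1 + \<mu> j *\<^sub>R R j + \<mu> k *\<^sub>R R k + Y k * Z j + Y j * Z k) * (R k * R j)
       + ((1/2) *\<^sub>R 1 + \<mu> j *\<^sub>R R j + \<mu> k *\<^sub>R R k + Y k * Z j + Y j * Z k) * (R k * R j) * Z j * R j
     = Z k * R k + (2 * \<mu> j) *\<^sub>R ((Z k + Z j) * (R k * R j))"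
proof -
  have kj: "k \<noteq> j" using jk by simp
  have zy: "Z j * Y j = Y j * Z j - 1 - (2 * \<mu> j) *\<^sub>R R j" "Z k * Y k = Y k * Z k - 1 - (2 * \<mu> k) *\<^sub>R R k"
    using YZi[of j] YZi[of k] by (simp_all add: algebra_simps)
  note rules0 = RZi[of j] RYi[of j] RZi[of k] RYi[of k] RZ[OF jk] RY[OF jk] RZ[OF kj] RY[OF kj]
    Rc[of k j] RR[of j] RR[of k] zy YY[OF kj] ZY[OF jk] ZY[OF kj] ZZ[OF kj]
  note rules = rules0 rules0[THEN nest]
  show ?thesis
    apply (simp add: algebra_simps rules two_sc)
    done
qed


lemma comb: "a *\<^sub>R m + a *\<^sub>R m = (2*a) *\<^sub>R m" "a *\<^sub>R m + (a *\<^sub>R m + r) = (2*a) *\<^sub>R m + r"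
  "m + m = 2 *\<^sub>R m" "m + (m + r) = 2 *\<^sub>R m + r"
  for m :: "'a::real_vector"
  by (simp_all add: scaleR_add_left[symmetric] add.assoc[symmetric] scaleR_2)

lemma xC_insert: "finite C \<Longrightarrow> j \<notin> C \<Longrightarrow> xC (insert j C) = Y j + xC C"
  by (simp add: xC_def)
lemma DC_insert: "finite C \<Longrightarrow> j \<notin> C \<Longrightarrow> DC (insert j C) = Z j + DC C"
  by (simp add: DC_def)

lemma main_id:
  assumes C: "finite C" and jk: "j \<noteq> k" and jC: "j \<notin> C" and kC: "k \<notin> C"
  shows "Gm (insert j C) * Gm {j,k} + Gm {j,k} * Gm (insert j C)
     = Gm (insert k C) + (2 * \<mu> j) *\<^sub>R Gm (insert j (insert k C)) + (2 * \<mu> k) *\<^sub>R Gm C"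
proof -
  have kj: "k \<noteq> j" using jk by simp
  have zy: "Z j * Y j = Y j * Z j - 1 - (2 * \<mu> j) *\<^sub>R R j" "Z k * Y k = Y k * Z k - 1 - (2 * \<mu> k) *\<^sub>R R k"
    using YZi[of j] YZi[of k] by (simp_all add: algebra_simps)
  have e1: "Gm (insert j C) = (SS C + (1/2) *\<^sub>R 1 + \<mu> j *\<^sub>R R j + xC C * Z j + Y j * DC C) * (RA C * R j)"
    using C jC by (simp add: Gm_def SS_insert RA_insert)
  have e2: "Gm (insert k C) = (SS C + (1/2) *\<^sub>R 1 + \<mu> k *\<^sub>R R k + xC C * Z k + Y k * DC C) * (RA C * R k)"
    using C kC by (simp add: Gm_def SS_insert RA_insert)
  have e3: "Gm {j,k} = ((1/2) *\<^sub>R 1 + \<mu> j *\<^sub>R R j + \<mu> k *\<^sub>R R k + Y k * Z j + Y j * Z k) * (R k * R j)"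
    using jk by (simp add: Gm_def SS_insert RA_insert SS_empty RA_empty xC_def DC_def algebra_simps)
  have e4: "Gm (insert j (insert k C)) = (SS C + (1/2) *\<^sub>R 1 + \<mu> k *\<^sub>R R k + xC C * Z k + Y k * DC C
      + (1/2) *\<^sub>R 1 + \<mu> j *\<^sub>R R j + (Y k + xC C) * Z j + Y j * (Z k + DC C)) * (RA C * R k * R j)"
    using C jC kC jk by (simp add: Gm_def SS_insert RA_insert xC_insert DC_insert)
  have e5: "Gm C = SS C * RA C" by (simp add: Gm_def)
  note rules0 = RZi[of j] RYi[of j] RZi[of k] RYi[of k] RZ[OF jk] RY[OF jk] RZ[OF kj] RY[OF kj]
    Rc[of k j] RR[of j] RR[of k] zy YY[OF kj] ZY[OF jk] ZY[OF kj] ZZ[OF kj]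
    Y_SS[OF jC] Z_SS[OF jC] R_SS[OF jC] Y_SS[OF kC] Z_SS[OF kC] R_SS[OF kC]
    Y_xC[OF jC] Y_DC[OF jC] Z_xC[OF jC] Z_DC[OF jC] R_xC[OF jC] R_DC[OF jC]
    Y_xC[OF kC] Y_DC[OF kC] Z_xC[OF kC] Z_DC[OF kC] R_xC[OF kC] R_DC[OF kC]
    RAY[OF jC] RAZ[OF jC] RAR[of C j] RAY[OF kC] RAZ[OF kC] RAR[of C k]
  note rules = rules0 rules0[THEN nest]
  show ?thesis unfolding e1 e2 e3 e4 e5
    apply (simp add: algebra_simps rules two_sc)
    apply (simp add: comb mult_ac)
    done
qed

lemma ga_add: "Rep_lop u \<in> gen_alg G \<Longrightarrow> Rep_lop v \<in> gen_alg G \<Longrightarrow> Rep_lop (u + v) \<in> gen_alg G"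
  by (simp add: plus_lop.rep_eq gen_alg.add)
lemma ga_sc: "Rep_lop u \<in> gen_alg G \<Longrightarrow> Rep_lop (c *\<^sub>R u) \<in> gen_alg G"
  by (simp add: scaleR_lop.rep_eq gen_alg.smult)
lemma ga_mult: "Rep_lop u \<in> gen_alg G \<Longrightarrow> Rep_lop v \<in> gen_alg G \<Longrightarrow> Rep_lop (u * v) \<in> gen_alg G"
  by (simp add: times_lop.rep_eq gen_alg.mult)
lemma ga_one: "Rep_lop 1 \<in> gen_alg G"
  by (simp add: one_lop.rep_eq gen_alg.one)
lemma ga_diff: "Rep_lop u \<in> gen_alg G \<Longrightarrow> Rep_lop v \<in> gen_alg G \<Longrightarrow> Rep_lop (u - v) \<in> gen_alg G"
  using ga_add[of u G "(-1) *\<^sub>R v"] ga_sc[of v G "-1"] by simp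

lemma Gm_in:
  assumes "finite A" "\<And>i. \<mu> i > 0"
  shows "Rep_lop (Gm A) \<in> gen_alg (Gamma \<mu> e)"
  using assms(1)
proof (induction "card A" arbitrary: A rule: less_induct)
  case less
  show ?case
  proof (cases "card A \<le> 2")
    case True
    then consider "card A = 0" | "card A = 1" | "card A = 2" by linarith
    then show ?thesis
    proof cases
      case 1
      hence "A = {}" using less.prems by simp
      hence "Gm A = (- (1/2)) *\<^sub>R 1" by (simp add: Gm_def SS_empty RA_empty)
      thus ?thesis using ga_sc ga_one by metis
    next
      case 2
      then obtain i where A: "A = {i}" by (metis card_1_singletonE)
      have "Gm A = SS {i} * (RA {} * R i)" unfolding A Gm_def by (simp add: RA_insert)
      also have "\<dots> = \<mu> i *\<^sub>R 1"
        by (simp add: SS_insert SS_empty RA_empty xC_def DC_def RR)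
      finally show ?thesis using ga_sc ga_one by metis
    next
      case 3
      then show ?thesis using gen_alg.gen[of A "Gamma \<mu> e"] by (simp add: Rep_Gm)
    qed
  next
    case False
    hence c3: "card A \<ge> 3" by simp
    have "A \<noteq> {}" using c3 by auto
    then obtain k where k: "k \<in> A" by blast
    have "card (A - {k}) \<ge> 2" using c3 k less.prems by simp
    hence "A - {k} \<noteq> {}" by (metis card.empty not_numeral_le_zero)
    then obtain j where j: "j \<in> A - {k}" by blast
    define C where "C = A - {j, k}"
    have jk: "j \<noteq> k" and jA: "j \<in> A" using j by auto
    have fC: "finite C" and jC: "j \<notin> C" and kC: "k \<notin> C" using less.prems by (auto simp: C_def)
    have A: "A = insert j (insert k C)" using jA k by (auto simp: C_def)
    have cA: "card A = card C + 2" using A fC jC kC jk by simp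
    have IH: "Rep_lop (Gm B) \<in> gen_alg (Gamma \<mu> e)" if "finite B" "card B < card A" for B
      using less.hyps that by blast
    have h1: "Rep_lop (Gm (insert j C)) \<in> gen_alg (Gamma \<mu> e)" using IH[of "insert j C"] fC jC cA by simp
    have h2: "Rep_lop (Gm (insert k C)) \<in> gen_alg (Gamma \<mu> e)" using IH[of "insert k C"] fC kC cA by simp
    have h3: "Rep_lop (Gm C) \<in> gen_alg (Gamma \<mu> e)" using IH[of C] fC cA by simp
    have h4: "Rep_lop (Gm {j,k}) \<in> gen_alg (Gamma \<mu> e)" using IH[of "{j,k}"] jk c3 by simp
    have m: "(2 * \<mu> j) *\<^sub>R Gm A = Gm (insert j C) * Gm {j,k} + Gm {j,k} * Gm (insert j C)
        - Gm (insert k C) - (2 * \<mu> k) *\<^sub>R Gm C"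
      using main_id[OF fC jk jC kC] unfolding A by (simp add: algebra_simps)
    have "Gm A = (1 / (2 * \<mu> j)) *\<^sub>R ((2 * \<mu> j) *\<^sub>R Gm A)"
      using assms(2)[of j] by simp
    also have "\<dots> = (1 / (2 * \<mu> j)) *\<^sub>R (Gm (insert j C) * Gm {j,k} + Gm {j,k} * Gm (insert j C)
        - Gm (insert k C) - (2 * \<mu> k) *\<^sub>R Gm C)" by (simp only: m)
    finally have eq: "Gm A = \<dots>" .
    show ?thesis unfolding eq
      by (intro ga_sc ga_diff ga_add ga_mult h1 h2 h3 h4)
  qed
qed
end

theorem lemma6:
  fixes \<mu> :: "'n::finite \<Rightarrow> real"
    and e :: "'n \<Rightarrow> 'v::real_vector \<Rightarrow> 'v"
    and A :: "'n set"
  assumes "card (UNIV :: 'n set) \<ge> 3"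
    and "\<forall>i. \<mu> i > 0"
    and "\<forall>i. linear (e i)"
    and "\<forall>i j v. e i (e j v) + e j (e i v) = (if i = j then (-2) *\<^sub>R v else 0)"
  shows "\<exists>F \<in> gen_alg (Gamma \<mu> e). \<forall>f \<in> Pspace. Gamma \<mu> e A f = F f"
proof -
  interpret dd \<mu> e by (rule dd.intro) (use assms(3,4) in auto)
  have "Rep_lop (Gm A) \<in> gen_alg (Gamma \<mu> e)" by (rule Gm_in) (use assms(2) in auto)
  thus ?thesis by (auto simp: Rep_Gm)
qed


end
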